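(* Let $H\in(\tfrac12,1)$, $\sigma>0$, $h=\frac H2+\frac14\in(\frac12,\frac34)$. Then $$\operatorname{Var}(\widehat{\mathcal{Y}}_n^H)=\sum_{i=i_n}^{n-1}(j_n^H(i))^2\xrightarrow[n\to\infty]{}4g_H^2\sum_{k=1}^\infty\rho_h^2(k)<\infty.$$
   Context: $c_H=\sqrt{\frac{2H\,\Gamma(\frac32-H)}{\Gamma(H+\frac12)\Gamma(2-2H)}}$, $C_H=c_H(H-\frac12)$, $g_H=\frac{\sigma c_H}{H+\frac12}$, $\rho_h(k)=\frac12((k+1)^{2h}+(k-1)^{2h}-2k^{2h})$, and for $1\le i<n$, $j_n^H(i)=\sigma C_H\int_{i-1}^i x^{\frac12-H}\Big(\int_0^1(v+n-1)^{H-\frac12}(v+n-1-x)^{H-\frac32}dv\Big)dx$. For $n\ge2$, $x_n=n-1-\Big(\big(1+\frac1{n-1}\big)^{\frac2{3-2H}}-1\Big)^{-1}$ and $i_n=\lfloor x_n\rfloor+1$. With $(\xi_i)$ i.i.d., $P(\xi_i=\pm1)=\frac12$, $\widehat{\mathcal{Y}}_n^H=\sum_{i=i_n}^{n-1}j_n^H(i)\xi_i$. *)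

theory Defs
  imports "HOL-Probability.Probability"
begin

definition c_H :: "real \<Rightarrow> real" where
  "c_H H = sqrt (2 * H * Gamma (3/2 - H) / (Gamma (H + 1/2) * Gamma (2 - 2*H)))"

definition C_H :: "real \<Rightarrow> real" where
  "C_H H = c_H H * (H - 1/2)"

definition g_H :: "real \<Rightarrow> real \<Rightarrow> real" where
  "g_H \<sigma> H = \<sigma> * c_H H / (H + 1/2)"

definition rho :: "real \<Rightarrow> nat \<Rightarrow> real" where
  "rho h k = ((real k + 1) powr (2*h) + (real k - 1) powr (2*h) - 2 * real k powr (2*h)) / 2"

text \<open>j_n^H(i), meaningful for 1 \<le> i < n (Lebesgue integrals over closed intervals).\<close>
definition jnH :: "real \<Rightarrow> real \<Rightarrow> nat \<Rightarrow> nat \<Rightarrow> real" where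
  "jnH \<sigma> H n i = \<sigma> * C_H H *
     (LINT x:{real i - 1 .. real i}|lborel.
        x powr (1/2 - H) *
        (LINT v:{0..1}|lborel.
           (v + real n - 1) powr (H - 1/2) * (v + real n - 1 - x) powr (H - 3/2)))"

definition x_n :: "real \<Rightarrow> nat \<Rightarrow> real" where
  "x_n H n = real n - 1 - 1 / ((1 + 1 / (real n - 1)) powr (2 / (3 - 2*H)) - 1)"

definition i_n :: "real \<Rightarrow> nat \<Rightarrow> int" where
  "i_n H n = \<lfloor>x_n H n\<rfloor> + 1"

text \<open>Index set {i_n, ..., n-1}, restricted to 1 \<le> i where j_n^H is defined.\<close>
definition idx :: "real \<Rightarrow> nat \<Rightarrow> nat set" where
  "idx H n = {i. 1 \<le> i \<and> i < n \<and> i_n H n \<le> int i}"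

definition Yhat :: "real \<Rightarrow> real \<Rightarrow> (nat \<Rightarrow> 'a \<Rightarrow> real) \<Rightarrow> nat \<Rightarrow> 'a \<Rightarrow> real" where
  "Yhat \<sigma> H \<xi> n \<omega> = (\<Sum>i\<in>idx H n. jnH \<sigma> H n i * \<xi> i \<omega>)"

end

theory Submission
  imports Defs "HOL-Real_Asymp.Real_Asymp"
begin

lemma lint_ftc:
  fixes f F :: "real \<Rightarrow> real"
  assumes "a \<le> b" "continuous_on {a..b} f" "continuous_on {a..b} F"
    "\<And>x. x \<in> {a<..<b} \<Longrightarrow> (F has_real_derivative f x) (at x)"
  shows "(LINT x:{a..b}|lborel. f x) = F b - F a"
proof -
  have si: "set_integrable lborel {a..b} f"
    unfolding set_integrable_def by (rule borel_integrable_compact) (use assms in auto)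
  have "(f has_integral (F b - F a)) {a..b}"
    by (rule fundamental_theorem_of_calculus_interior)
       (use assms in \<open>auto simp: has_real_derivative_iff_has_vector_derivative[symmetric]\<close>)
  then show ?thesis using set_borel_integral_eq_integral(2)[OF si] by (simp add: integral_unique)
qed

lemma inner_int:
  fixes c d :: real
  assumes "c > 0" "d > 0"
  shows "(LINT v:{0..1}|lborel. (v + c) powr (d-1)) = ((1+c) powr d - c powr d)/d"
proof -
  have "(LINT v:{0..1}|lborel. (v + c) powr (d-1)) = (1 + c) powr d / d - (0 + c) powr d / d"
    apply (rule lint_ftc[where F="\<lambda>v. (v + c) powr d / d"])
    using assms by (auto intro!: continuous_intros derivative_eq_intros)
  then show ?thesis by (simp add: diff_divide_distrib)
qed

lemma aux_alg: "(d::real) > 0 \<Longrightarrow> A + (d*B + d*(d*B) - (d*A + d*(d*A)))/(d+d*d) = B"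
proof -
  assume "d > 0"
  moreover have "0 < d*d" using \<open>d>0\<close> by simp
  ultimately have "d + d*d \<noteq> 0" by linarith
  then show ?thesis by (simp add: field_simps)
qed

lemma outer_int:
  fixes N I d :: real
  assumes "I \<le> N - 1" "d > 0"
  shows "(LINT x:{I-1..I}|lborel. ((N-x) powr d - (N-1-x) powr d)/d)
     = ((N-I+1) powr (d+1) + (N-I-1) powr (d+1) - 2 * (N-I) powr (d+1))/(d*(d+1))"
proof -
  let ?F = "\<lambda>x. - ((N-x) powr (d+1) - (N-1-x) powr (d+1))/(d*(d+1))"
  have "(LINT x:{I-1..I}|lborel. ((N-x) powr d - (N-1-x) powr d)/d) = ?F I - ?F (I-1)"
  proof (rule lint_ftc)
    show "continuous_on {I - 1..I} (\<lambda>x. ((N - x) powr d - (N - 1 - x) powr d) / d)"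
      using assms by (auto intro!: continuous_intros continuous_on_powr')
    show "continuous_on {I - 1..I} ?F"
      using assms by (auto intro!: continuous_intros continuous_on_powr')
    fix x assume x: "x \<in> {I - 1<..<I}"
    show "(?F has_real_derivative ((N - x) powr d - (N - 1 - x) powr d) / d) (at x)"
      using assms x
      apply (auto intro!: derivative_eq_intros)
      apply (simp add: field_simps)
      using aux_alg[of d] apply simp
      done
  qed (use assms in auto)
  also have "\<dots> = ((N-I+1) powr (d+1) + (N-I-1) powr (d+1) - 2 * (N-I) powr (d+1))/(d*(d+1))"
  proof -
    have e: "\<And>a b c D::real. - (b - c)/D - - (a - b)/D = (a + c - 2*b)/D"
      by (case_tac "D = 0") (simp_all add: field_simps)
    have "N - (I-1) = N - I + 1" "N-1-(I-1) = N - I" "N-1-I = N-I-1" by auto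
    then show ?thesis by (simp only: e)
  qed
  finally show ?thesis .
qed

lemma c_H_pos: "H > 1/2 \<Longrightarrow> H < 1 \<Longrightarrow> c_H H > 0"
  unfolding c_H_def by (intro real_sqrt_gt_zero divide_pos_pos mult_pos_pos Gamma_real_pos) auto

lemma C_H_nonneg: "H > 1/2 \<Longrightarrow> H < 1 \<Longrightarrow> C_H H \<ge> 0"
  unfolding C_H_def using c_H_pos[of H] by (intro mult_nonneg_nonneg) auto

lemma F_bounds:
  fixes H :: real and n :: nat and x :: real
  assumes H: "1/2 < H" and x: "x < real n - 1" and x0: "0 \<le> x"
  defines "d \<equiv> H - 1/2"
  shows "(real n - 1) powr d * (((real n - x) powr d - (real n - 1 - x) powr d)/d)
           \<le> (LINT v:{0..1}|lborel. (v + real n - 1) powr (H - 1/2) * (v + real n - 1 - x) powr (H - 3/2))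
       \<and> (LINT v:{0..1}|lborel. (v + real n - 1) powr (H - 1/2) * (v + real n - 1 - x) powr (H - 3/2))
           \<le> real n powr d * (((real n - x) powr d - (real n - 1 - x) powr d)/d)"
proof -
  define c where "c = real n - 1 - x"
  have c: "c > 0" using x by (simp add: c_def)
  have d: "d > 0" using H by (simp add: d_def)
  have eq: "(\<lambda>v. (v + real n - 1) powr (H - 1/2) * (v + real n - 1 - x) powr (H - 3/2))
       = (\<lambda>v. (v + real n - 1) powr d * (v + c) powr (d - 1))"
    by (rule ext) (simp add: c_def d_def algebra_simps)
  have G: "(LINT v:{0..1}|lborel. (v + c) powr (d-1)) = ((1+c) powr d - c powr d)/d"
    by (rule inner_int[OF c d])
  have cf: "(1 + c) = real n - x" by (simp add: c_def)
  have n1: "real n - 1 > 0" using x x0 by linarith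
  have si1: "set_integrable lborel {0..1} (\<lambda>v. (v + c) powr (d - 1))"
    unfolding set_integrable_def by (rule borel_integrable_compact) (use c in \<open>auto intro!: continuous_intros\<close>)
  have si2: "set_integrable lborel {0..1} (\<lambda>v. (v + real n - 1) powr d * (v + c) powr (d - 1))"
    unfolding set_integrable_def
  proof (rule borel_integrable_compact)
    show "continuous_on {0..1} (\<lambda>v. (v + real n - 1) powr d * (v + c) powr (d - 1))"
      using c x n1 by (auto intro!: continuous_intros)
  qed simp
  have lo: "(LINT v:{0..1}|lborel. (real n - 1) powr d * (v + c) powr (d - 1))
        \<le> (LINT v:{0..1}|lborel. (v + real n - 1) powr d * (v + c) powr (d - 1))"
  proof (rule set_integral_mono[OF _ si2])
    show "set_integrable lborel {0..1} (\<lambda>v. (real n - 1) powr d * (v + c) powr (d - 1))"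
      using si1 by simp
    fix v :: real assume v: "v \<in> {0..1}"
    have "(real n - 1) powr d \<le> (v + real n - 1) powr d"
      using v n1 d by (intro powr_mono2) auto
    then show "(real n - 1) powr d * (v + c) powr (d - 1) \<le> (v + real n - 1) powr d * (v + c) powr (d - 1)"
      by (intro mult_right_mono) auto
  qed
  have hi: "(LINT v:{0..1}|lborel. (v + real n - 1) powr d * (v + c) powr (d - 1))
        \<le> (LINT v:{0..1}|lborel. real n powr d * (v + c) powr (d - 1))"
  proof (rule set_integral_mono[OF si2])
    show "set_integrable lborel {0..1} (\<lambda>v. real n powr d * (v + c) powr (d - 1))"
      using si1 by simp
    fix v :: real assume v: "v \<in> {0..1}"
    have "(v + real n - 1) powr d \<le> real n powr d"
      using v n1 d by (intro powr_mono2) auto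
    then show "(v + real n - 1) powr d * (v + c) powr (d - 1) \<le> real n powr d * (v + c) powr (d - 1)"
      by (intro mult_right_mono) auto
  qed
  show ?thesis
    using lo hi unfolding eq set_integral_mult_right G cf by (simp add: c_def)
qed

lemma key:
  fixes H \<sigma> :: real and n i :: nat
  assumes H: "1/2 < H" "H < 1" and s: "\<sigma> \<ge> 0" and i: "2 \<le> i" "i < n"
  defines "T \<equiv> LINT x:{real i-1..real i}|lborel. ((real n-x) powr (H-1/2) - (real n-1-x) powr (H-1/2))/(H-1/2)"
  shows "\<sigma> * C_H H * T \<le> jnH \<sigma> H n i \<and>
         jnH \<sigma> H n i \<le> (real n/(real i-1)) powr (H-1/2) * (\<sigma> * C_H H * T)"
proof -
  define d where "d = H - 1/2"
  have d: "d > 0" using H by (simp add: d_def)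
  define F where "F x = (LINT v:{0..1}|lborel. (v + real n - 1) powr (H - 1/2) * (v + real n - 1 - x) powr (H - 3/2))" for x
  define Gt where "Gt x = ((real n - x) powr d - (real n - 1 - x) powr d)/d" for x
  define P where "P x = x powr (1/2 - H) * F x" for x
  define K where "K = (real n/(real i-1)) powr d"
  have i1: "real i - 1 \<ge> 1" using i by simp
  have iin: "real i \<le> real n - 1" using i by simp
  have Gt0: "Gt x \<ge> 0" if "x \<le> real n - 1" for x
    unfolding Gt_def using d that by (intro divide_nonneg_pos) (auto intro!: powr_mono2)
  have bnd: "0 \<le> Gt x \<and> Gt x \<le> P x \<and> P x \<le> K * Gt x" if x: "x \<in> {real i - 1..<real i}" for x
  proof -
    have x0: "x > 0" "x < real n - 1" using x i1 iin by auto
    have FB: "(real n - 1) powr d * Gt x \<le> F x \<and> F x \<le> real n powr d * Gt x"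
      using F_bounds[OF H(1) x0(2)] x0 unfolding F_def Gt_def d_def by auto
    have g: "Gt x \<ge> 0" using Gt0 x0 by simp
    have e: "x powr (1/2 - H) = inverse (x powr d)" using powr_minus[of x d] by (simp add: d_def)
    have px: "x powr d > 0" using x0 by simp
    have "real i powr d \<le> (real n - 1) powr d" using iin d by (intro powr_mono2) auto
    moreover have "x powr d \<le> real i powr d" using x x0 d by (intro powr_mono2) auto
    ultimately have "x powr d * Gt x \<le> (real n - 1) powr d * Gt x"
      using g by (intro mult_right_mono) auto
    also have "\<dots> \<le> F x" using FB by simp
    finally have lo: "Gt x \<le> P x"
      unfolding P_def e using px by (simp add: field_simps)
    have "(real i - 1) powr d \<le> x powr d" using x i1 d by (intro powr_mono2) auto
    moreover have "(real i - 1) powr d > 0" using i1 by simp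
    ultimately have inv: "inverse (x powr d) \<le> inverse ((real i - 1) powr d)"
      by (rule le_imp_inverse_le)
    have F0: "F x \<ge> 0" using FB g by (meson mult_nonneg_nonneg order.trans powr_ge_zero)
    have "P x = F x * inverse (x powr d)" unfolding P_def e by simp
    also have "\<dots> \<le> (real n powr d * Gt x) * inverse ((real i - 1) powr d)"
      by (rule mult_mono) (use FB inv F0 in auto)
    also have "\<dots> = K * Gt x" unfolding K_def using i1 by (simp add: powr_divide field_simps)
    finally have hi: "P x \<le> K * Gt x" .
    show ?thesis using lo hi g by simp
  qed
  have siG: "set_integrable lborel {real i - 1..real i} Gt"
    unfolding set_integrable_def Gt_def
    by (rule borel_integrable_compact) (use iin d in \<open>auto intro!: continuous_intros continuous_on_powr'\<close>)
  have AEb: "AE x in lborel. x \<in> {real i - 1..real i} \<longrightarrow> 0 \<le> Gt x \<and> Gt x \<le> P x \<and> P x \<le> K * Gt x"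
    using AE_lborel_singleton[of "real i"] by eventually_elim (use bnd in auto)
  have siP: "set_integrable lborel {real i - 1..real i} P"
  proof (rule set_integrable_bound[where f="\<lambda>x. K * Gt x"])
    show "set_integrable lborel {real i - 1..real i} (\<lambda>x. K * Gt x)" using siG by simp
    show "set_borel_measurable lborel {real i - 1..real i} P"
      unfolding set_borel_measurable_def P_def F_def set_lebesgue_integral_def by measurable
    show "AE x in lborel. x \<in> {real i - 1..real i} \<longrightarrow> norm (P x) \<le> norm (K * Gt x)"
      using AEb by eventually_elim auto
  qed
  have j: "jnH \<sigma> H n i = \<sigma> * C_H H * (LINT x:{real i-1..real i}|lborel. P x)"
    unfolding jnH_def P_def F_def by simp
  have T: "T = (LINT x:{real i-1..real i}|lborel. Gt x)" unfolding T_def Gt_def d_def by simp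
  have I1: "(LINT x:{real i-1..real i}|lborel. Gt x) \<le> (LINT x:{real i-1..real i}|lborel. P x)"
    by (rule set_integral_mono_AE[OF siG siP]) (use AEb in \<open>eventually_elim, auto\<close>)
  have I2: "(LINT x:{real i-1..real i}|lborel. P x) \<le> (LINT x:{real i-1..real i}|lborel. K * Gt x)"
    by (rule set_integral_mono_AE[OF siP]) (use siG AEb in \<open>simp, eventually_elim, auto\<close>)
  have sc: "\<sigma> * C_H H \<ge> 0" using s C_H_nonneg[OF H] by simp
  show ?thesis
    unfolding j T using mult_left_mono[OF I1 sc] mult_left_mono[OF I2 sc]
    by (simp add: K_def d_def mult_ac)
qed

lemma bern_ge:
  fixes p t :: real
  assumes "1 \<le> p" "0 \<le> t" shows "1 + p*t \<le> (1+t) powr p"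
proof -
  let ?f = "\<lambda>y. (1+y) powr p - 1 - p * y"
  have "?f 0 \<le> ?f t"
  proof (rule DERIV_nonneg_imp_nondecreasing[OF assms(2)])
    fix x assume x: "0 \<le> x" "x \<le> t"
    have "DERIV ?f x :> p * (1+x) powr (p-1) - p"
      using x by (auto intro!: derivative_eq_intros)
    moreover have "1 \<le> (1+x) powr (p-1)" using x assms by (intro ge_one_powr_ge_zero) auto
    then have "p * (1+x) powr (p-1) - p \<ge> 0" using assms
      by (metis diff_ge_0_iff_ge mult.right_neutral mult_left_mono order_trans zero_le_one)
    ultimately show "\<exists>y. DERIV ?f x :> y \<and> y \<ge> 0" by blast
  qed
  then show ?thesis by simp
qed

lemma bern_le:
  fixes p t :: real
  assumes "0 \<le> p" "p \<le> 1" "0 \<le> t" shows "(1+t) powr p \<le> 1 + p*t"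
proof -
  let ?f = "\<lambda>y. 1 + p * y - (1+y) powr p"
  have "?f 0 \<le> ?f t"
  proof (rule DERIV_nonneg_imp_nondecreasing[OF assms(3)])
    fix x assume x: "0 \<le> x" "x \<le> t"
    have "DERIV ?f x :> p - p * (1+x) powr (p-1)"
      using x by (auto intro!: derivative_eq_intros)
    moreover have "(1+x) powr (p-1) \<le> 1 powr (p-1)" using x assms by (intro powr_mono2') auto
    then have "p - p * (1+x) powr (p-1) \<ge> 0" using assms
      by (simp add: mult_left_le)
    ultimately show "\<exists>y. DERIV ?f x :> y \<and> y \<ge> 0" by blast
  qed
  then show ?thesis by simp
qed

lemma rho_T:
  fixes H h :: real and k :: nat
  assumes H: "1/2 < H" and h: "h = H/2 + 1/4" and k: "1 \<le> k"
  shows "rho h k = (H-1/2)*(H+1/2)/2 *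
     (LINT x:{0..1}|lborel. ((real k + 1 - x) powr (H-1/2) - (real k - x) powr (H-1/2))/(H-1/2))"
proof -
  define L where "L = (LINT x:{0..1}|lborel. ((real k + 1 - x) powr (H-1/2) - (real k - x) powr (H-1/2))/(H-1/2))"
  have o0: "(LINT x:{1-1..1}|lborel. ((real k + 1 - x) powr (H-1/2) - (real k + 1 - 1 - x) powr (H-1/2))/(H-1/2))
     = ((real k + 1 - 1 + 1) powr (H-1/2+1) + (real k + 1 - 1 - 1) powr (H-1/2+1) - 2 * (real k + 1 - 1) powr (H-1/2+1))/((H-1/2)*(H-1/2+1))"
    by (rule outer_int) (use H k in auto)
  have r: "real k + 1 - 1 + 1 = real k + 1" "real k + 1 - 1 - 1 = real k - 1" "real k + 1 - 1 = real k"
     "(1::real) - 1 = 0" "H - 1/2 + 1 = H + 1/2" by auto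
  have o: "L = ((real k + 1) powr (H+1/2) + (real k - 1) powr (H+1/2) - 2 * (real k) powr (H+1/2))/((H-1/2)*(H+1/2))"
    using o0 unfolding r L_def by simp
  have e2: "2*h = H+1/2" using h by simp
  have pos: "(H-1/2)*(H+1/2) \<noteq> 0" using H by simp
  show ?thesis unfolding rho_def e2 L_def[symmetric] o using pos by (simp add: field_simps)
qed

lemma si_compact:
  fixes f :: "real \<Rightarrow> real"
  assumes "continuous_on {a..b} f" shows "set_integrable lborel {a..b} f"
  unfolding set_integrable_def using assms by (intro borel_integrable_compact) auto

lemma lint_const01: "(LINT x:{0..1::real}|lborel. c) = (c::real)"
  by (simp add: set_integral_const)

lemma rho_bounds:
  fixes H h :: real and k :: nat
  assumes H: "1/2 < H" "H < 1" and h: "h = H/2 + 1/4" and k: "1 \<le> k"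
  shows "0 \<le> rho h k \<and> (2 \<le> k \<longrightarrow> rho h k \<le> (H-1/2)*(H+1/2)/2 * (real k - 1) powr (H - 3/2))"
proof -
  define d where "d = H - 1/2"
  have d: "0 < d" "d \<le> 1" using H by (auto simp: d_def)
  define f where "f x = ((real k + 1 - x) powr d - (real k - x) powr d)/d" for x
  have r: "rho h k = d*(H+1/2)/2 * (LINT x:{0..1}|lborel. f x)"
    using rho_T[OF H(1) h k] unfolding f_def d_def by simp
  have cf: "continuous_on {0..1} f"
    unfolding f_def using k d by (auto intro!: continuous_intros continuous_on_powr')
  have f0: "0 \<le> f x" if "x \<in> {0..1}" for x
    unfolding f_def using that k d by (intro divide_nonneg_pos) (auto intro!: powr_mono2)
  have I0: "0 \<le> (LINT x:{0..1}|lborel. f x)"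
    using set_integral_mono[OF si_compact[of 0 1 "\<lambda>_. 0"] si_compact[OF cf]] f0
    by (simp add: lint_const01)
  have c: "0 \<le> d*(H+1/2)/2" using d H by simp
  have up: "2 \<le> k \<longrightarrow> rho h k \<le> (H-1/2)*(H+1/2)/2 * (real k - 1) powr (H - 3/2)"
  proof
    assume k2: "2 \<le> k"
    have fb: "f x \<le> (real k - 1) powr (d - 1)" if x: "x \<in> {0..1}" for x
    proof -
      define y where "y = real k - x"
      have y: "y \<ge> real k - 1" "y > 0" using x k2 by (auto simp: y_def)
      have yy: "y * (1 + 1/y) = real k + 1 - x" using y by (simp add: y_def field_simps)
      have "(real k + 1 - x) powr d = (y * (1 + 1/y)) powr d"
        unfolding yy ..
      also have "\<dots> = y powr d * (1 + 1/y) powr d" by (rule powr_mult)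
      also have "\<dots> \<le> y powr d * (1 + d * (1/y))"
        using bern_le[of d "1/y"] d y by (intro mult_left_mono) auto
      also have "\<dots> = y powr d + d * (y powr d / y)" by (simp add: field_simps)
      also have "y powr d / y = y powr (d - 1)" using y by (simp add: powr_diff)
      finally have "f x \<le> y powr (d - 1)" unfolding f_def y_def[symmetric] using d
        by (simp add: field_simps)
      also have "\<dots> \<le> (real k - 1) powr (d - 1)" using y k2 d by (intro powr_mono2') auto
      finally show ?thesis .
    qed
    have "(LINT x:{0..1}|lborel. f x) \<le> (LINT x:{0..1::real}|lborel. (real k - 1) powr (d - 1))"
      using set_integral_mono[OF si_compact[OF cf] si_compact[of 0 1 "\<lambda>_. (real k - 1) powr (d - 1)"]] fb
      by auto
    then have "(LINT x:{0..1}|lborel. f x) \<le> (real k - 1) powr (d - 1)" by (simp add: lint_const01)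
    then show "rho h k \<le> (H-1/2)*(H+1/2)/2 * (real k - 1) powr (H - 3/2)"
      unfolding r using c by (simp add: d_def mult_left_mono)
  qed
  have "0 \<le> rho h k" unfolding r using I0 c by simp
  then show ?thesis using up by simp
qed

lemma rho_summable:
  fixes H h :: real
  assumes H: "1/2 < H" "H < 1" and h: "h = H/2 + 1/4"
  shows "summable (\<lambda>k. (rho h (Suc k))\<^sup>2)"
proof (rule summable_comparison_test_ev)
  define C where "C = (H-1/2)*(H+1/2)/2"
  show "summable (\<lambda>k. C^2 * real k powr (2*H - 3))"
    by (rule summable_mult) (use H in \<open>simp add: summable_real_powr_iff\<close>)
  show "\<forall>\<^sub>F k in sequentially. norm ((rho h (Suc k))\<^sup>2) \<le> C^2 * real k powr (2*H - 3)"
    using eventually_ge_at_top[of 1]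
  proof eventually_elim
    case (elim k)
    have b: "0 \<le> rho h (Suc k)" "rho h (Suc k) \<le> C * real k powr (H - 3/2)"
      using rho_bounds[OF H h, of "Suc k"] elim by (auto simp: C_def)
    have "(rho h (Suc k))\<^sup>2 \<le> (C * real k powr (H - 3/2))\<^sup>2"
      using b by (intro power_mono) auto
    also have "\<dots> = C^2 * real k powr (2*H - 3)"
      by (simp add: power2_eq_square powr_add[symmetric] mult_ac)
    finally show ?case using b by simp
  qed
qed

lemma key2:
  fixes H \<sigma> h :: real and n i :: nat
  assumes H: "1/2 < H" "H < 1" and s: "\<sigma> \<ge> 0" and h: "h = H/2 + 1/4" and i: "2 \<le> i" "i < n"
  shows "2 * g_H \<sigma> H * rho h (n - i) \<le> jnH \<sigma> H n i \<and>
         jnH \<sigma> H n i \<le> (real n/(real i-1)) powr (H-1/2) * (2 * g_H \<sigma> H * rho h (n - i))"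
proof -
  define T where "T = (LINT x:{real i-1..real i}|lborel. ((real n-x) powr (H-1/2) - (real n-1-x) powr (H-1/2))/(H-1/2))"
  define X where "X = (real n - real i + 1) powr (H+1/2) + (real n - real i - 1) powr (H+1/2) - 2 * (real n - real i) powr (H+1/2)"
  have K: "\<sigma> * C_H H * T \<le> jnH \<sigma> H n i \<and> jnH \<sigma> H n i \<le> (real n/(real i-1)) powr (H-1/2) * (\<sigma> * C_H H * T)"
    using key[OF H s i] unfolding T_def .
  have o: "T = ((real n - real i + 1) powr (H-1/2+1) + (real n - real i - 1) powr (H-1/2+1) - 2 * (real n - real i) powr (H-1/2+1))/((H-1/2)*(H-1/2+1))"
    unfolding T_def by (rule outer_int) (use H i in auto)
  have e1: "H - 1/2 + 1 = H + 1/2" by simp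
  have Tv: "T = X/((H-1/2)*(H+1/2))" using o unfolding e1 X_def .
  have e2: "2*h = H+1/2" using h by simp
  have rv: "rho h (n - i) = X/2" unfolding rho_def e2 X_def using i by (simp add: of_nat_diff)
  have eq: "\<sigma> * C_H H * T = 2 * g_H \<sigma> H * rho h (n - i)"
  proof -
    have nz: "H - 1/2 \<noteq> 0" "H + 1/2 \<noteq> 0" using H by auto
    have gen: "\<And>s c A B X :: real. A \<noteq> 0 \<Longrightarrow> s*(c*A)*(X/(A*B)) = 2*(s*c/B)*(X/2)"
      by (simp add: field_simps)
    show ?thesis unfolding Tv rv C_H_def g_H_def by (rule gen[OF nz(1)])
  qed
  show ?thesis using K unfolding eq .
qed

lemma xn_bounds:
  fixes H :: real and n :: nat
  assumes H: "1/2 < H" "H < 1" and n: "2 \<le> n"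
  shows "(real n - 1) * (H - 1/2) \<le> x_n H n \<and> x_n H n \<le> real n - 1 - (real n - 1)/3"
proof -
  define a where "a = 2/(3 - 2*H)"
  define t where "t = 1/(real n - 1)"
  have t: "0 < t" "t \<le> 1" using n by (auto simp: t_def)
  have a: "1 \<le> a" "a \<le> 2" using H by (auto simp: a_def field_simps)
  define D where "D = (1 + t) powr a - 1"
  have xe: "x_n H n = real n - 1 - 1/D" unfolding x_n_def D_def a_def t_def by simp
  have Dlo: "a * t \<le> D" using bern_ge[OF a(1), of t] t by (simp add: D_def)
  have "(1+t) powr a \<le> (1+t) powr 2" using a t by (intro powr_mono) auto
  also have "\<dots> = 1 + 2*t + t*t" using t by (simp add: power2_eq_square algebra_simps)
  also have "\<dots> \<le> 1 + 3*t" using t by (simp add: mult_left_le)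
  finally have Dhi: "D \<le> 3 * t" by (simp add: D_def)
  have at: "0 < a * t" using a t by simp
  have "1/D \<le> 1/(a*t)" using Dlo at by (intro divide_left_mono) auto
  also have "1/(a*t) = (real n - 1) * (3 - 2*H)/2" using n H by (simp add: a_def t_def field_simps)
  moreover have "(real n - 1) * (H - 1/2) = real n - 1 - (real n - 1) * (3 - 2*H)/2"
    by (simp add: field_simps)
  ultimately have l: "(real n - 1) * (H - 1/2) \<le> x_n H n" unfolding xe by linarith
  have "1/(3*t) \<le> 1/D" using Dlo Dhi at by (intro divide_left_mono) auto
  also have "1/(3*t) = (real n - 1)/3" using n by (simp add: t_def)
  finally have u: "x_n H n \<le> real n - 1 - (real n - 1)/3" unfolding xe by simp
  show ?thesis using l u by simp
qed

lemma variance_part: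
  fixes M :: "'a measure" and \<xi> :: "nat \<Rightarrow> 'a \<Rightarrow> real" and c :: "nat \<Rightarrow> real" and I :: "nat set"
  assumes P: "prob_space M"
    and meas: "\<And>i. \<xi> i \<in> borel_measurable M"
    and ind: "prob_space.indep_vars M (\<lambda>_. borel) \<xi> UNIV"
    and p1: "\<And>i. measure M {\<omega> \<in> space M. \<xi> i \<omega> = 1} = 1/2"
    and pm1: "\<And>i. measure M {\<omega> \<in> space M. \<xi> i \<omega> = -1} = 1/2"
    and fin: "finite I"
  shows "prob_space.variance M (\<lambda>\<omega>. \<Sum>i\<in>I. c i * \<xi> i \<omega>) = (\<Sum>i\<in>I. (c i)\<^sup>2)"
proof -
  interpret prob_space M by (rule P)
  note meas[measurable]
  have AE1: "AE \<omega> in M. \<xi> i \<omega> = 1 \<or> \<xi> i \<omega> = -1" for i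
  proof -
    let ?A = "{\<omega> \<in> space M. \<xi> i \<omega> = 1}" and ?B = "{\<omega> \<in> space M. \<xi> i \<omega> = -1}"
    have ev: "?A \<in> events" "?B \<in> events" by measurable
    have "prob (?A \<union> ?B) = prob ?A + prob ?B"
      by (rule finite_measure_Union) (use ev in auto)
    then have "prob (?A \<union> ?B) = 1" using p1[of i] pm1[of i] by simp
    then have "AE \<omega> in M. \<omega> \<in> ?A \<union> ?B" by (rule AE_prob_1)
    then show ?thesis by eventually_elim auto
  qed
  have int1: "integrable M (\<xi> i)" for i
    by (rule integrable_const_bound[where B=1]) (use AE1[of i] in \<open>eventually_elim, auto\<close>)
  have int2: "integrable M (\<lambda>\<omega>. \<xi> i \<omega> * \<xi> j \<omega>)" for i j
    by (rule integrable_const_bound[where B=1]) (use AE1[of i] AE1[of j] in \<open>eventually_elim, auto\<close>)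
  have E0: "expectation (\<xi> i) = 0" for i
  proof -
    let ?A = "{\<omega> \<in> space M. \<xi> i \<omega> = 1}" and ?B = "{\<omega> \<in> space M. \<xi> i \<omega> = -1}"
    have ev: "?A \<in> events" "?B \<in> events" by measurable
    have "expectation (\<xi> i) = expectation (\<lambda>\<omega>. indicator ?A \<omega> - indicator ?B \<omega>)"
    proof (rule integral_cong_AE)
      show "AE \<omega> in M. \<xi> i \<omega> = indicator ?A \<omega> - indicator ?B \<omega>"
        using AE1[of i] AE_space by eventually_elim (auto simp: indicator_def)
    qed (use ev in auto)
    also have "\<dots> = prob ?A - prob ?B"
    proof -
      have i1: "integrable M (indicator ?A :: 'a \<Rightarrow> real)" "integrable M (indicator ?B :: 'a \<Rightarrow> real)"
        using ev by (auto intro!: integrable_real_indicator simp: emeasure_eq_measure)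
      have "expectation (\<lambda>\<omega>. indicator ?A \<omega> - indicator ?B \<omega> :: real) = expectation (indicator ?A) - expectation (indicator ?B)"
        using i1 by (simp add: Bochner_Integration.integral_diff)
      also have "\<dots> = prob ?A - prob ?B" by simp
      finally show ?thesis .
    qed
    finally show ?thesis using p1[of i] pm1[of i] by simp
  qed
  have E2: "expectation (\<lambda>\<omega>. \<xi> i \<omega> * \<xi> i \<omega>) = 1" for i
  proof -
    have "expectation (\<lambda>\<omega>. \<xi> i \<omega> * \<xi> i \<omega>) = expectation (\<lambda>\<omega>. 1)"
    proof (rule integral_cong_AE)
      show "AE \<omega> in M. \<xi> i \<omega> * \<xi> i \<omega> = 1"
        using AE1[of i] by eventually_elim auto
    qed auto
    then show ?thesis by (simp add: prob_space)
  qed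
  have E12: "expectation (\<lambda>\<omega>. \<xi> i \<omega> * \<xi> j \<omega>) = 0" if "i \<noteq> j" for i j
  proof -
    have indij: "indep_vars (\<lambda>_. borel) \<xi> {i, j}" by (rule indep_vars_subset[OF ind]) auto
    have "expectation (\<lambda>\<omega>. \<Prod>k\<in>{i,j}. \<xi> k \<omega>) = (\<Prod>k\<in>{i,j}. expectation (\<xi> k))"
      by (rule indep_vars_lebesgue_integral) (use indij int1 in auto)
    then show ?thesis using that E0 by simp
  qed
  have EY: "expectation (\<lambda>\<omega>. \<Sum>i\<in>I. c i * \<xi> i \<omega>) = 0"
    by (subst Bochner_Integration.integral_sum) (use int1 E0 in auto)
  have "(\<lambda>\<omega>. ((\<Sum>i\<in>I. c i * \<xi> i \<omega>) - 0)\<^sup>2) = (\<lambda>\<omega>. \<Sum>i\<in>I. \<Sum>j\<in>I. c i * c j * (\<xi> i \<omega> * \<xi> j \<omega>))"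
    by (auto simp: power2_eq_square sum_product mult_ac)
  then have "variance (\<lambda>\<omega>. \<Sum>i\<in>I. c i * \<xi> i \<omega>) = expectation (\<lambda>\<omega>. \<Sum>i\<in>I. \<Sum>j\<in>I. c i * c j * (\<xi> i \<omega> * \<xi> j \<omega>))"
    unfolding EY by simp
  also have "\<dots> = (\<Sum>i\<in>I. \<Sum>j\<in>I. c i * c j * expectation (\<lambda>\<omega>. \<xi> i \<omega> * \<xi> j \<omega>))"
    by (simp add: Bochner_Integration.integral_sum int2)
  also have "\<dots> = (\<Sum>i\<in>I. \<Sum>j\<in>I. if j = i then (c i)\<^sup>2 else 0)"
    by (intro sum.cong refl) (auto simp: E2 E12 power2_eq_square)
  also have "\<dots> = (\<Sum>i\<in>I. (c i)\<^sup>2)" using fin by simp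
  finally show ?thesis .
qed

lemma idx_finite: "finite (idx H n)"
  by (rule finite_subset[of _ "{..<n}"]) (auto simp: idx_def)

lemma idx_mem_eventually:
  fixes H :: real and m :: nat
  assumes H: "1/2 < H" "H < 1" and n: "3*m + 4 \<le> n"
  shows "n - Suc m \<in> idx H n \<and> 2 \<le> n - Suc m"
proof -
  have n2: "2 \<le> n" using n by simp
  have xb: "x_n H n \<le> real n - 1 - (real n - 1)/3" using xn_bounds[OF H n2] by simp
  have "real_of_int (i_n H n) \<le> x_n H n + 1" unfolding i_n_def by simp
  also have "\<dots> \<le> real (n - Suc m)"
  proof -
    have "real n \<ge> 3 * real m + 4" using n by linarith
    moreover have e: "real (n - Suc m) = real n - real m - 1" using n by (simp add: of_nat_diff)
    ultimately have "x_n H n + 1 \<le> real n - real m - 1" using xb by (simp add: field_simps)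
    then show ?thesis unfolding e .
  qed
  finally have "real_of_int (i_n H n) \<le> real_of_int (int (n - Suc m))" by simp
  then have "i_n H n \<le> int (n - Suc m)" by (simp only: of_int_le_iff)
  then show ?thesis using n by (auto simp: idx_def)
qed

lemma idx_lower:
  fixes H :: real
  assumes H: "1/2 < H" "H < 1" and n: "2 \<le> n" and i: "i \<in> idx H n"
  shows "(real n - 1) * (H - 1/2) < real i"
proof -
  have "int i \<ge> i_n H n" using i by (simp add: idx_def)
  then have "real_of_int (i_n H n) \<le> real i" by (metis of_int_le_iff of_int_of_nat_eq)
  moreover have "x_n H n < real_of_int (i_n H n)" unfolding i_n_def by linarith
  ultimately show ?thesis using xn_bounds[OF H n] by linarith
qed

lemma g_H_nonneg: "1/2 < H \<Longrightarrow> H < 1 \<Longrightarrow> 0 \<le> \<sigma> \<Longrightarrow> 0 \<le> g_H \<sigma> H"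
  unfolding g_H_def using c_H_pos[of H] by simp

lemma limit_part:
  fixes H \<sigma> h :: real
  assumes H: "1/2 < H" "H < 1" and s: "\<sigma> > 0" and h: "h = H/2 + 1/4"
  shows "(\<lambda>n. \<Sum>i\<in>idx H n. (jnH \<sigma> H n i)\<^sup>2) \<longlonglongrightarrow> 4 * (g_H \<sigma> H)\<^sup>2 * (\<Sum>k. (rho h (Suc k))\<^sup>2)"
proof -
  define g where "g = g_H \<sigma> H"
  define \<delta> where "\<delta> = H - 1/2"
  have \<delta>: "0 < \<delta>" using H by (simp add: \<delta>_def)
  define A where "A m = 2 * g * rho h (Suc m)" for m
  have g0: "0 \<le> g" unfolding g_def using g_H_nonneg[OF H] s by simp
  have A0: "0 \<le> A m" for m unfolding A_def using g0 rho_bounds[OF H h, of "Suc m"] by simp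
  define b where "b m n = (if n - Suc m \<in> idx H n then (jnH \<sigma> H n (n - Suc m))\<^sup>2 else 0)" for m n
  define R where "R = (4/\<delta>) powr \<delta>"
  have K2: "A m \<le> jnH \<sigma> H n (n - Suc m) \<and> jnH \<sigma> H n (n - Suc m) \<le> (real n/(real (n - Suc m) - 1)) powr \<delta> * A m"
    if "2 \<le> n - Suc m" for m n
  proof -
    have nn: "n - (n - Suc m) = Suc m" using that by simp
    show ?thesis using key2[OF H _ h, of \<sigma> "n - Suc m" n] that s
      unfolding nn A_def g_def \<delta>_def by simp
  qed
  have Seq: "(\<Sum>i\<in>idx H n. (jnH \<sigma> H n i)\<^sup>2) = (\<Sum>m. b m n)" for n
  proof -
    have sub: "idx H n \<subseteq> {..<n}" by (auto simp: idx_def)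
    have "(\<Sum>m. b m n) = (\<Sum>m<n. b m n)"
      by (rule suminf_finite) (auto simp: b_def idx_def)
    also have "\<dots> = (\<Sum>i<n. if i \<in> idx H n then (jnH \<sigma> H n i)\<^sup>2 else 0)"
      unfolding b_def by (rule sum.nat_diff_reindex)
    also have "\<dots> = (\<Sum>i\<in>{..<n} \<inter> idx H n. (jnH \<sigma> H n i)\<^sup>2)"
      by (rule sum.inter_restrict[symmetric]) simp
    also have "{..<n} \<inter> idx H n = idx H n" using sub by blast
    finally show ?thesis by simp
  qed
  have lim: "(\<lambda>n. b m n) \<longlonglongrightarrow> (A m)\<^sup>2" for m
  proof -
    have ev: "eventually (\<lambda>n. 3*m + 4 \<le> n) sequentially" by (rule eventually_ge_at_top)
    have base: "(\<lambda>n. real n/(real (n - Suc m) - 1)) \<longlonglongrightarrow> 1"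
    proof -
      have "(\<lambda>n. real n/(real n - real m - 2)) \<longlonglongrightarrow> 1" by real_asymp
      moreover have "eventually (\<lambda>n. real n/(real n - real m - 2) = real n/(real (n - Suc m) - 1)) sequentially"
        using ev by eventually_elim (simp add: of_nat_diff)
      ultimately show ?thesis by (rule Lim_transform_eventually)
    qed
    have up: "(\<lambda>n. (real n/(real (n - Suc m) - 1)) powr \<delta> * A m) \<longlonglongrightarrow> A m"
      using tendsto_mult[OF tendsto_powr[OF base tendsto_const, of \<delta>] tendsto_const[of "A m"]] by simp
    have j: "(\<lambda>n. jnH \<sigma> H n (n - Suc m)) \<longlonglongrightarrow> A m"
    proof (rule tendsto_sandwich[OF _ _ tendsto_const up])
      show "\<forall>\<^sub>F n in sequentially. A m \<le> jnH \<sigma> H n (n - Suc m)"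
        using ev by eventually_elim (use K2 idx_mem_eventually[OF H] in blast)
      show "\<forall>\<^sub>F n in sequentially. jnH \<sigma> H n (n - Suc m) \<le> (real n/(real (n - Suc m) - 1)) powr \<delta> * A m"
        using ev by eventually_elim (use K2 idx_mem_eventually[OF H] in blast)
    qed
    have "(\<lambda>n. (jnH \<sigma> H n (n - Suc m))\<^sup>2) \<longlonglongrightarrow> (A m)\<^sup>2" by (rule tendsto_power[OF j])
    moreover have "eventually (\<lambda>n. (jnH \<sigma> H n (n - Suc m))\<^sup>2 = b m n) sequentially"
      using ev by eventually_elim (use idx_mem_eventually[OF H] in \<open>simp add: b_def\<close>)
    ultimately show ?thesis by (rule Lim_transform_eventually)
  qed
  define N0 where "N0 = nat \<lceil>2/\<delta>\<rceil> + 2"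
  have bnd: "norm (b m n) \<le> R\<^sup>2 * (A m)\<^sup>2" if n: "N0 \<le> n" for m n
  proof (cases "n - Suc m \<in> idx H n")
    case False then show ?thesis by (simp add: b_def)
  next
    case True
    define i where "i = n - Suc m"
    have n2: "2 \<le> n" using n by (simp add: N0_def)
    have rn: "real n \<ge> 2/\<delta> + 2" using n real_nat_ceiling_ge[of "2/\<delta>"] unfolding N0_def by linarith
    have il: "(real n - 1) * \<delta> < real i" using idx_lower[OF H n2 True] by (simp add: i_def \<delta>_def)
    have nd: "(real n - 1) * \<delta> \<ge> 2"
    proof -
      have "(real n - 1) * \<delta> \<ge> (2/\<delta>) * \<delta>" using rn \<delta> by (intro mult_right_mono) auto
      then show ?thesis using \<delta> by simp
    qed
    have i1: "real i - 1 \<ge> (real n - 1) * \<delta> / 2" using il nd by linarith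
    have i2: "2 \<le> i" using i1 nd by linarith
    have kb: "A m \<le> jnH \<sigma> H n i \<and> jnH \<sigma> H n i \<le> (real n/(real i - 1)) powr \<delta> * A m"
    proof -
      have "2 \<le> n - Suc m" using i2 by (simp add: i_def)
      from K2[OF this] show ?thesis unfolding i_def .
    qed
    have "real n / (real i - 1) \<le> real n / ((real n - 1) * \<delta> / 2)"
      using i1 nd by (intro divide_left_mono) auto
    also have "\<dots> = 2 * real n / ((real n - 1) * \<delta>)" by simp
    also have "\<dots> \<le> 4 / \<delta>"
    proof -
      have "2 * real n \<le> 4 * (real n - 1)" using n2 by simp
      then have "2 * real n * \<delta> \<le> 4 * (real n - 1) * \<delta>" using \<delta> by (intro mult_right_mono) auto
      then show ?thesis using \<delta> n2 by (simp add: divide_simps mult_ac)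
    qed
    finally have "(real n / (real i - 1)) powr \<delta> \<le> R"
      unfolding R_def using i1 nd \<delta> by (intro powr_mono2) auto
    then have "jnH \<sigma> H n i \<le> R * A m" using kb A0[of m] by (meson mult_right_mono order.trans)
    moreover have "0 \<le> jnH \<sigma> H n i" using kb A0[of m] by linarith
    ultimately have "(jnH \<sigma> H n i)\<^sup>2 \<le> (R * A m)\<^sup>2" by (intro power_mono) auto
    then show ?thesis using True by (simp add: b_def i_def power_mult_distrib)
  qed
  have summ: "summable (\<lambda>m. (rho h (Suc m))\<^sup>2)" by (rule rho_summable[OF H h])
  have sA: "(\<lambda>m. (A m)\<^sup>2) = (\<lambda>m. (4 * g\<^sup>2) * (rho h (Suc m))\<^sup>2)"
    by (auto simp: A_def power_mult_distrib)
  have T: "(\<lambda>n. suminf (\<lambda>m. b m n)) \<longlonglongrightarrow> suminf (\<lambda>m. (A m)\<^sup>2)"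
  proof -
    have "eventually (\<lambda>n. summable (\<lambda>k. norm (b k n))) sequentially \<and>
           summable (\<lambda>n. norm ((A n)\<^sup>2)) \<and>
           ((\<lambda>n. suminf (\<lambda>k. b k n)) \<longlongrightarrow> suminf (\<lambda>m. (A m)\<^sup>2)) sequentially"
    proof (rule tannerys_theorem[where M="\<lambda>m. R\<^sup>2 * (A m)\<^sup>2"])
      show "\<And>k. (\<lambda>n. b k n) \<longlonglongrightarrow> (A k)\<^sup>2" by (rule lim)
      show "\<forall>\<^sub>F (k, n) in sequentially \<times>\<^sub>F sequentially. norm (b k n) \<le> R\<^sup>2 * (A k)\<^sup>2"
        unfolding eventually_prod_sequentially using bnd by blast
      show "summable (\<lambda>m. R\<^sup>2 * (A m)\<^sup>2)"
      proof -
        have "summable (\<lambda>m. (A m)\<^sup>2)" unfolding sA by (rule summable_mult[OF summ])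
        then show ?thesis by (rule summable_mult)
      qed
    qed simp
    then show ?thesis by blast
  qed
  have "suminf (\<lambda>m. (A m)\<^sup>2) = 4 * g\<^sup>2 * (\<Sum>k. (rho h (Suc k))\<^sup>2)"
    unfolding sA by (rule suminf_mult[OF summ])
  then show ?thesis using T unfolding Seq[symmetric] g_def by simp
qed

theorem lemma5p2:
  fixes M :: "'a measure" and \<xi> :: "nat \<Rightarrow> 'a \<Rightarrow> real"
    and H \<sigma> h :: real
  assumes "prob_space M"
    and "1/2 < H" "H < 1" "\<sigma> > 0" "h = H/2 + 1/4"
    and "\<And>i. \<xi> i \<in> borel_measurable M"
    and "prob_space.indep_vars M (\<lambda>_. borel) \<xi> UNIV"
    and "\<And>i. measure M {\<omega> \<in> space M. \<xi> i \<omega> = 1} = 1/2"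
    and "\<And>i. measure M {\<omega> \<in> space M. \<xi> i \<omega> = -1} = 1/2"
  shows "(\<forall>n\<ge>2. prob_space.variance M (Yhat \<sigma> H \<xi> n)
              = (\<Sum>i\<in>idx H n. (jnH \<sigma> H n i)\<^sup>2))
      \<and> summable (\<lambda>k. (rho h (Suc k))\<^sup>2)
      \<and> (\<lambda>n. \<Sum>i\<in>idx H n. (jnH \<sigma> H n i)\<^sup>2)
           \<longlonglongrightarrow> 4 * (g_H \<sigma> H)\<^sup>2 * (\<Sum>k. (rho h (Suc k))\<^sup>2)"
proof (intro conjI allI impI)
  fix n :: nat
  have Y: "Yhat \<sigma> H \<xi> n = (\<lambda>\<omega>. \<Sum>i\<in>idx H n. jnH \<sigma> H n i * \<xi> i \<omega>)"
    by (rule ext) (simp add: Yhat_def)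
  show "prob_space.variance M (Yhat \<sigma> H \<xi> n) = (\<Sum>i\<in>idx H n. (jnH \<sigma> H n i)\<^sup>2)"
    unfolding Y by (rule variance_part[OF assms(1) assms(6) assms(7) assms(8) assms(9) idx_finite])
next
  show "summable (\<lambda>k. (rho h (Suc k))\<^sup>2)" by (rule rho_summable[OF assms(2,3,5)])
next
  show "(\<lambda>n. \<Sum>i\<in>idx H n. (jnH \<sigma> H n i)\<^sup>2) \<longlonglongrightarrow> 4 * (g_H \<sigma> H)\<^sup>2 * (\<Sum>k. (rho h (Suc k))\<^sup>2)"
    by (rule limit_part[OF assms(2,3,4,5)])
qed

end
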